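(* Let $B\in\mathbb{C}^{n\times n}$ be nonzero of rank $r$ with Hartwig–Spindelböck decomposition $B=U\begin{bmatrix}\Sigma K&\Sigma L\\0&0\end{bmatrix}U^*$, let $T\in\mathbb{C}^{r\times r}$ be idempotent, and let $A=U\begin{bmatrix}(\Sigma^{-1}T)^\dagger K&(\Sigma^{-1}T)^\dagger L\\0&0\end{bmatrix}U^*$, so that $A\le^{\diamond}B$. Then $A^\dagger\le^{\diamond}B^\dagger$ if and only if $T(T^*-I_r)\Sigma^{-2}T=0$.
   Context: $M^*$ is the conjugate transpose, $M^\dagger$ the Moore–Penrose inverse, $\mathcal{R}(M)$ the column space. Hartwig–Spindelböck decomposition: every $B\in\mathbb{C}^{n\times n}$ of rank $r>0$ can be written $B=U\begin{bmatrix}\Sigma K&\Sigma L\\0&0\end{bmatrix}U^*$ with $U$ unitary, $\Sigma\in\mathbb{C}^{r\times r}$ the positive diagonal matrix of nonzero singular values of $B$, $K\in\mathbb{C}^{r\times r}$, $L\in\mathbb{C}^{r\times(n-r)}$ with $KK^*+LL^*=I_r$. Diamond order: $X\le^{\diamond}Y$ iff $\mathcal{R}(X)\subseteq\mathcal{R}(Y)$, $\mathcal{R}(X^* )\subseteq\mathcal{R}(Y^* )$, and $XY^*X=XX^*X$. *)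

theory Defs
  imports "Jordan_Normal_Form.DL_Rank" "Jordan_Normal_Form.Schur_Decomposition"
begin

definition unitary_mat :: "complex mat \<Rightarrow> nat \<Rightarrow> bool" where
  "unitary_mat U n \<longleftrightarrow> U \<in> carrier_mat n n \<and> U * mat_adjoint U = 1\<^sub>m n \<and> mat_adjoint U * U = 1\<^sub>m n"

definition penrose :: "complex mat \<Rightarrow> complex mat \<Rightarrow> bool" where
  "penrose M X \<longleftrightarrow> X \<in> carrier_mat (dim_col M) (dim_row M) \<and>
     M * X * M = M \<and> X * M * X = X \<and>
     mat_adjoint (M * X) = M * X \<and> mat_adjoint (X * M) = X * M"

definition mp_inverse :: "complex mat \<Rightarrow> complex mat" where
  "mp_inverse M = (THE X. penrose M X)"

definition col_range :: "complex mat \<Rightarrow> complex vec set" where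
  "col_range M = {M *\<^sub>v x | x. x \<in> carrier_vec (dim_col M)}"

definition diamond_le :: "complex mat \<Rightarrow> complex mat \<Rightarrow> bool" where
  "diamond_le X Y \<longleftrightarrow> col_range X \<subseteq> col_range Y \<and>
     col_range (mat_adjoint X) \<subseteq> col_range (mat_adjoint Y) \<and>
     X * mat_adjoint Y * X = X * mat_adjoint X * X"

end

theory Submission
  imports Defs
begin



lemma adj_alt: "mat_adjoint (A::complex mat) = mat (dim_col A) (dim_row A) (\<lambda>(i,j). cnj (A $$ (j,i)))"
  unfolding mat_adjoint_def by (rule eq_matI, auto simp: mat_of_rows_index)

lemma adj_dims[simp]: "dim_row (mat_adjoint (A::complex mat)) = dim_col A" "dim_col (mat_adjoint A) = dim_row A"
  by (auto simp: adj_alt)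

lemma adj_index[simp]: "i < dim_col A \<Longrightarrow> j < dim_row A \<Longrightarrow> mat_adjoint (A::complex mat) $$ (i,j) = cnj (A $$ (j,i))"
  by (auto simp: adj_alt)

lemma adj_carrier[simp]: "(A::complex mat) \<in> carrier_mat m n \<Longrightarrow> mat_adjoint A \<in> carrier_mat n m"
  unfolding carrier_mat_def by simp

lemma adj_adj[simp]: "mat_adjoint (mat_adjoint (A::complex mat)) = A"
  by (rule eq_matI, auto)

lemma adj_add: assumes r: "dim_row (A::complex mat) = dim_row B" and c: "dim_col A = dim_col B"
  shows "mat_adjoint (A + B) = mat_adjoint A + mat_adjoint B"
proof (rule eq_matI)
  fix i j assume i: "i < dim_row (mat_adjoint A + mat_adjoint B)" and j: "j < dim_col (mat_adjoint A + mat_adjoint B)"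
  hence i1: "i < dim_col B" and j1: "j < dim_row B" by simp_all
  show "mat_adjoint (A + B) $$ (i, j) = (mat_adjoint A + mat_adjoint B) $$ (i, j)"
    using i1 j1 r c by simp
qed (use r c in simp_all)

lemma adj_minus: assumes r: "dim_row (A::complex mat) = dim_row B" and c: "dim_col A = dim_col B"
  shows "mat_adjoint (A - B) = mat_adjoint A - mat_adjoint B"
proof (rule eq_matI)
  fix i j assume i: "i < dim_row (mat_adjoint A - mat_adjoint B)" and j: "j < dim_col (mat_adjoint A - mat_adjoint B)"
  hence i1: "i < dim_col B" and j1: "j < dim_row B" by simp_all
  show "mat_adjoint (A - B) $$ (i, j) = (mat_adjoint A - mat_adjoint B) $$ (i, j)"
    using i1 j1 r c by simp
qed (use r c in simp_all)

lemma adj_one[simp]: "mat_adjoint (1\<^sub>m k :: complex mat) = 1\<^sub>m k"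
  by (rule eq_matI, auto)

lemma adj_zero[simp]: "mat_adjoint (0\<^sub>m a b :: complex mat) = 0\<^sub>m b a"
  by (rule eq_matI, auto)

lemma adj_diag: "mat_adjoint (mat k k (\<lambda>(i,j). if i = j then complex_of_real (f i) else 0)) = mat k k (\<lambda>(i,j). if i = j then complex_of_real (f i) else 0)"
  by (rule eq_matI, auto)

lemma adj_mult: "dim_col (A::complex mat) = dim_row B \<Longrightarrow> mat_adjoint (A * B) = mat_adjoint B * mat_adjoint A"
proof (rule eq_matI)
  fix i j assume d: "dim_col A = dim_row B" and i: "i < dim_row (mat_adjoint B * mat_adjoint A)" and j: "j < dim_col (mat_adjoint B * mat_adjoint A)"
  have "mat_adjoint (A * B) $$ (i, j) = cnj (\<Sum>k\<in>{0..<dim_row B}. A $$ (j,k) * B $$ (k,i))"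
    using i j d by (simp add: scalar_prod_def)
  also have "\<dots> = (\<Sum>k\<in>{0..<dim_row B}. cnj (B $$ (k,i)) * cnj (A $$ (j,k)))"
    by (simp add: cnj_sum mult.commute)
  also have "\<dots> = (mat_adjoint B * mat_adjoint A) $$ (i,j)"
    using i j d by (simp add: scalar_prod_def)
  finally show "mat_adjoint (A * B) $$ (i, j) = (mat_adjoint B * mat_adjoint A) $$ (i,j)" .
qed auto

lemma adj_four_block:
  assumes "(A::complex mat) \<in> carrier_mat r1 c1" "B \<in> carrier_mat r1 c2" "C \<in> carrier_mat r2 c1" "D \<in> carrier_mat r2 c2"
  shows "mat_adjoint (four_block_mat A B C D) = four_block_mat (mat_adjoint A) (mat_adjoint C) (mat_adjoint B) (mat_adjoint D)"
proof (rule eq_matI)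
  fix i j assume i: "i < dim_row (four_block_mat (mat_adjoint A) (mat_adjoint C) (mat_adjoint B) (mat_adjoint D))"
    and j: "j < dim_col (four_block_mat (mat_adjoint A) (mat_adjoint C) (mat_adjoint B) (mat_adjoint D))"
  from assms have [simp]: "dim_row A = r1" "dim_col A = c1" "dim_row B = r1" "dim_col B = c2"
      "dim_row C = r2" "dim_col C = c1" "dim_row D = r2" "dim_col D = c2" by auto
  from i j have i': "i < c1 + c2" and j': "j < r1 + r2" by auto
  show "mat_adjoint (four_block_mat A B C D) $$ (i, j) =
    four_block_mat (mat_adjoint A) (mat_adjoint C) (mat_adjoint B) (mat_adjoint D) $$ (i, j)"
    using i' j' by (simp add: index_mat_four_block)
qed auto

lemma assoc_dims: "dim_col (A::'a::semiring_0 mat) = dim_row B \<Longrightarrow> dim_col B = dim_row C \<Longrightarrow> A * B * C = A * (B * C)"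
proof -
  assume 1: "dim_col A = dim_row B" and 2: "dim_col B = dim_row C"
  have a: "A \<in> carrier_mat (dim_row A) (dim_col A)" by (rule carrier_matI, rule refl, rule refl)
  have b: "B \<in> carrier_mat (dim_col A) (dim_col B)" by (rule carrier_matI, rule 1[symmetric], rule refl)
  have c: "C \<in> carrier_mat (dim_col B) (dim_col C)" by (rule carrier_matI, rule 2[symmetric], rule refl)
  show ?thesis by (rule assoc_mult_mat[OF a b c])
qed
lemma cnj_mult_self: "cnj z * z = complex_of_real ((cmod z)^2)"
  by (subst complex_norm_square) (rule mult.commute)

lemma adj_mult_self_zero:
  assumes "mat_adjoint N * N = 0\<^sub>m (dim_col N) (dim_col N)"
  shows "N = 0\<^sub>m (dim_row N) (dim_col (N::complex mat))"
proof (rule eq_matI)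
  fix i j assume i: "i < dim_row (0\<^sub>m (dim_row N) (dim_col N) :: complex mat)" and j: "j < dim_col (0\<^sub>m (dim_row N) (dim_col N) :: complex mat)"
  hence i: "i < dim_row N" and j: "j < dim_col N" by auto
  have "(mat_adjoint N * N) $$ (j,j) = (\<Sum>k\<in>{0..<dim_row N}. cnj (N$$(k,j)) * N$$(k,j))"
    using j by (simp add: scalar_prod_def)
  also have "\<dots> = (\<Sum>k\<in>{0..<dim_row N}. complex_of_real ((cmod (N$$(k,j)))^2))"
    by (rule sum.cong) (simp_all only: cnj_mult_self)
  also have "\<dots> = complex_of_real (\<Sum>k\<in>{0..<dim_row N}. (cmod (N$$(k,j)))^2)" by simp
  finally have eq: "(mat_adjoint N * N) $$ (j,j) = complex_of_real (\<Sum>k\<in>{0..<dim_row N}. (cmod (N$$(k,j)))^2)" .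
  have z: "(mat_adjoint N * N) $$ (j,j) = 0" using assms j by simp
  have S: "(\<Sum>k\<in>{0..<dim_row N}. (cmod (N$$(k,j)))^2) = 0"
    using z unfolding eq of_real_eq_0_iff .
  have "(cmod (N$$(i,j)))^2 = 0"
    using S sum_nonneg_eq_0_iff[of "{0..<dim_row N}" "\<lambda>k. (cmod (N$$(k,j)))^2"] i by simp
  thus "N $$ (i,j) = 0\<^sub>m (dim_row N) (dim_col N) $$ (i,j)" using i j by simp
qed auto



lemma minus_zero_eq: assumes X: "(X::complex mat) \<in> carrier_mat a b" and Y: "Y \<in> carrier_mat a b" and e: "X - Y = 0\<^sub>m a b"
  shows "X = Y"
proof -
  have d: "dim_row X = a" "dim_col X = b" "dim_row Y = a" "dim_col Y = b" using carrier_matD[OF X] carrier_matD[OF Y] by simp_all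
  show ?thesis
  proof (rule eq_matI)
    fix i j assume i: "i < dim_row Y" and j: "j < dim_col Y"
    have "(X - Y) $$ (i,j) = 0" unfolding e using i j d by simp
    thus "X $$ (i,j) = Y $$ (i,j)" using i j by simp
  qed (simp_all only: d)
qed

lemma penrose_sym: assumes p: "penrose A X" shows "penrose X A"
proof -
  note c = p[unfolded penrose_def]
  have X: "X \<in> carrier_mat (dim_col A) (dim_row A)" by (rule c[THEN conjunct1])
  have A: "A \<in> carrier_mat (dim_col X) (dim_row X)" using carrier_matD[OF X] by (intro carrier_matI) simp_all
  show ?thesis unfolding penrose_def
    by (intro conjI A c[THEN conjunct2, THEN conjunct1] c[THEN conjunct2, THEN conjunct2, THEN conjunct1]
       c[THEN conjunct2, THEN conjunct2, THEN conjunct2, THEN conjunct1] c[THEN conjunct2, THEN conjunct2, THEN conjunct2, THEN conjunct2])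
qed

lemma penrose_unique:
  assumes "penrose A X" "penrose A Y" shows "X = Y"
proof -
  let ?m = "dim_row A" and ?n = "dim_col A"
  from assms have X: "X \<in> carrier_mat ?n ?m" and Y: "Y \<in> carrier_mat ?n ?m"
    and AXA: "A * X * A = A" and XAX: "X * A * X = X" and AX: "mat_adjoint (A * X) = A * X" and XA: "mat_adjoint (X * A) = X * A"
    and AYA: "A * Y * A = A" and YAY: "Y * A * Y = Y" and AY: "mat_adjoint (A * Y) = A * Y" and YA: "mat_adjoint (Y * A) = Y * A"
    unfolding penrose_def by blast+
  have [simp]: "dim_row X = ?n" "dim_col X = ?m" "dim_row Y = ?n" "dim_col Y = ?m"
    using carrier_matD[OF X] carrier_matD[OF Y] by simp_all
  have adjA: "mat_adjoint A = mat_adjoint A * mat_adjoint Y * mat_adjoint A"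
    using arg_cong[OF AYA, of mat_adjoint] by (simp add: adj_mult assoc_dims)
  have adjA2: "mat_adjoint A = mat_adjoint A * mat_adjoint X * mat_adjoint A"
    using arg_cong[OF AXA, of mat_adjoint] by (simp add: adj_mult assoc_dims)
  have "X = X * (A * X)" using XAX by (simp add: assoc_dims)
  also have "\<dots> = X * (mat_adjoint X * mat_adjoint A)" using AX by (simp add: adj_mult)
  also have "\<dots> = X * (mat_adjoint X * (mat_adjoint A * mat_adjoint Y * mat_adjoint A))" by (simp only: adjA[symmetric])
  also have "\<dots> = X * ((mat_adjoint X * mat_adjoint A) * (mat_adjoint Y * mat_adjoint A))" by (simp add: assoc_dims)
  also have "\<dots> = X * ((A * X) * (A * Y))" using AX AY by (simp add: adj_mult)
  also have "\<dots> = (X * A * X) * A * Y" by (simp add: assoc_dims)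
  also have "\<dots> = X * A * Y" using XAX by simp
  finally have 1: "X = X * A * Y" .
  have "Y = (Y * A) * Y" using YAY by simp
  also have "\<dots> = (mat_adjoint A * mat_adjoint Y) * Y" using YA by (simp add: adj_mult)
  also have "\<dots> = ((mat_adjoint A * mat_adjoint X * mat_adjoint A) * mat_adjoint Y) * Y" by (simp only: adjA2[symmetric])
  also have "\<dots> = (mat_adjoint A * mat_adjoint X) * (mat_adjoint A * mat_adjoint Y) * Y" by (simp add: assoc_dims)
  also have "\<dots> = (X * A) * (Y * A) * Y" using XA YA by (simp add: adj_mult)
  also have "\<dots> = X * A * (Y * A * Y)" by (simp add: assoc_dims)
  also have "\<dots> = X * A * Y" using YAY by simp
  finally show ?thesis using 1 by simp
qed

lemma mp_inverse_eq: assumes p: "penrose A X" shows "mp_inverse A = X"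
  unfolding mp_inverse_def
proof (rule the_equality)
  show "penrose A X" by (rule p)
  fix Y assume "penrose A Y" thus "Y = X" using p by (rule penrose_unique)
qed




lemma g1_exists:
  assumes A: "(A::complex mat) \<in> carrier_mat nr nc"
  shows "\<exists>G \<in> carrier_mat nc nr. A * G * A = A"
proof -
  define C where "C = gauss_jordan_single A"
  note gj = gauss_jordan_single[OF A C_def[symmetric]]
  from gj(4) obtain P Q where CPA: "C = P * A" and P: "P \<in> carrier_mat nr nr" and Q: "Q \<in> carrier_mat nr nr"
    and PQ: "P * Q = 1\<^sub>m nr" and QP: "Q * P = 1\<^sub>m nr" by blast
  have Cc: "C \<in> carrier_mat nr nc" by (rule gj(2))
  from gj(3) obtain f where piv: "pivot_fun C f nc" unfolding row_echelon_form_def using Cc by auto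
  have dC: "dim_row C = nr" using Cc by auto
  note pD = pivot_funD[OF dC piv]
  define G0 where "G0 = mat nc nr (\<lambda>(j,i). if f i = j then (1::complex) else 0)"
  have G0: "G0 \<in> carrier_mat nc nr" unfolding G0_def by auto
  have CG: "(C * G0) $$ (a,i) = (if f i < nc \<and> a = i then 1 else 0)" if a: "a < nr" and i: "i < nr" for a i
  proof -
    have "(C * G0) $$ (a,i) = (\<Sum>j\<in>{0..<nc}. C $$ (a,j) * (if f i = j then 1 else 0))"
      using a i Cc unfolding G0_def by (simp add: scalar_prod_def)
    also have "\<dots> = (\<Sum>j\<in>{0..<nc}. if f i = j then C $$ (a,j) else 0)"
      by (rule sum.cong, auto)
    also have "\<dots> = (if f i < nc then C $$ (a, f i) else 0)" by (simp add: sum.delta)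
    also have "\<dots> = (if f i < nc \<and> a = i then 1 else 0)"
      using pD(4)[OF i] pD(5)[OF i _ a] by auto
    finally show ?thesis .
  qed
  have CGC: "C * G0 * C = C"
  proof (rule eq_matI)
    fix a b assume a: "a < dim_row C" and b: "b < dim_col C"
    hence a: "a < nr" and b: "b < nc" using Cc by auto
    have "(C * G0 * C) $$ (a,b) = (\<Sum>i\<in>{0..<nr}. (C * G0) $$ (a,i) * C $$ (i,b))"
      using a b Cc G0 by (simp add: scalar_prod_def del: assoc_mult_mat)
    also have "\<dots> = (\<Sum>i\<in>{0..<nr}. if i = a then (if f a < nc then C $$ (a,b) else 0) else 0)"
      by (rule sum.cong, auto simp: CG a)
    also have "\<dots> = (if f a < nc then C $$ (a,b) else 0)" using a by (simp add: sum.delta')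
    also have "\<dots> = C $$ (a,b)" using pD(1)[OF a] pD(2)[OF a, of b] b by auto
    finally show "(C * G0 * C) $$ (a,b) = C $$ (a,b)" .
  qed (insert Cc G0, auto)
  have "Q * C = (Q * P) * A"
    unfolding CPA using Q P A by (simp add: assoc_dims)
  hence AQC: "A = Q * C" using QP A by simp
  have "A * (G0 * P) * A = Q * (C * G0 * (P * Q) * C)"
    using AQC Q P G0 Cc by (simp add: assoc_dims)
  also have "\<dots> = A" using PQ CGC AQC G0 Cc by simp
  finally show ?thesis using G0 P by (intro bexI[of _ "G0 * P"], auto)
qed




lemma F1:
  assumes A: "(A::complex mat) \<in> carrier_mat m n" and Z: "Z \<in> carrier_mat n n"
    and HZH: "mat_adjoint A * A * Z * (mat_adjoint A * A) = mat_adjoint A * A"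
  shows "A * Z * mat_adjoint A * A = A"
proof -
  let ?H = "mat_adjoint A * A"
  note [simp] = carrier_matD[OF A] carrier_matD[OF Z]
  define W where "W = Z * ?H - 1\<^sub>m n"
  have H: "?H \<in> carrier_mat n n" by (intro carrier_matI, simp_all)
  have W: "W \<in> carrier_mat n n" unfolding W_def by (intro carrier_matI, simp_all)
  note [simp] = carrier_matD[OF W]
  have "?H * W = ?H * (Z * ?H) - ?H * 1\<^sub>m n"
    unfolding W_def by (rule mult_minus_distrib_mat[OF H _ one_carrier_mat], insert Z H, simp_all)
  also have "?H * (Z * ?H) = ?H" using HZH H Z by (simp add: assoc_dims)
  finally have HW: "?H * W = 0\<^sub>m n n" using H by simp
  have "A * W = A * (Z * ?H) - A * 1\<^sub>m n"
    unfolding W_def by (rule mult_minus_distrib_mat[OF A _ one_carrier_mat], insert Z H, simp_all)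
  also have "A * (Z * ?H) = A * Z * mat_adjoint A * A" using A Z by (simp add: assoc_dims)
  finally have AW: "A * W = A * Z * mat_adjoint A * A - A" using A by simp
  have "mat_adjoint (A * W) * (A * W) = mat_adjoint W * (?H * W)"
    using A W by (simp add: adj_mult assoc_dims)
  also have "\<dots> = 0\<^sub>m n n" using HW W by simp
  finally have "A * W = 0\<^sub>m m n" using adj_mult_self_zero[of "A * W"] A W by simp
  with AW have "A * Z * mat_adjoint A * A - A = 0\<^sub>m m n" by simp
  moreover have c: "A * Z * mat_adjoint A * A \<in> carrier_mat m n" by (intro carrier_matI, simp_all)
  ultimately show ?thesis using minus_zero_eq[OF c A] by blast
qed

lemma HZH_adj:
  assumes A: "(A::complex mat) \<in> carrier_mat m n" and Z: "Z \<in> carrier_mat n n"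
    and HZH: "mat_adjoint A * A * Z * (mat_adjoint A * A) = mat_adjoint A * A"
  shows "mat_adjoint A * A * mat_adjoint Z * (mat_adjoint A * A) = mat_adjoint A * A"
proof -
  note [simp] = carrier_matD[OF A] carrier_matD[OF Z]
  have "mat_adjoint (mat_adjoint A * A * Z * (mat_adjoint A * A)) = mat_adjoint A * A * mat_adjoint Z * (mat_adjoint A * A)"
    using A Z by (simp add: adj_mult assoc_dims)
  thus ?thesis using HZH A by (simp add: adj_mult)
qed

lemma indep:
  assumes A: "(A::complex mat) \<in> carrier_mat m n" and Z: "Z \<in> carrier_mat n n" and Z': "Z' \<in> carrier_mat n n"
    and HZH: "mat_adjoint A * A * Z * (mat_adjoint A * A) = mat_adjoint A * A"
    and HZH': "mat_adjoint A * A * Z' * (mat_adjoint A * A) = mat_adjoint A * A"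
  shows "A * Z * mat_adjoint A = A * Z' * mat_adjoint A"
proof -
  note [simp] = carrier_matD[OF A] carrier_matD[OF Z] carrier_matD[OF Z']
  have 1: "A * mat_adjoint Z * mat_adjoint A * A = A"
    by (rule F1[OF A _ HZH_adj[OF A Z HZH]], insert Z, simp_all)
  have 2: "mat_adjoint A * A * Z * mat_adjoint A = mat_adjoint A"
    using arg_cong[OF 1, of mat_adjoint] A Z by (simp add: adj_mult assoc_dims)
  have 3: "A * Z' * mat_adjoint A * A = A" by (rule F1[OF A Z' HZH'])
  have "A * Z * mat_adjoint A = (A * Z' * mat_adjoint A * A) * Z * mat_adjoint A" using 3 by simp
  also have "\<dots> = A * Z' * (mat_adjoint A * A * Z * mat_adjoint A)" using A Z Z' by (simp add: assoc_dims)
  also have "\<dots> = A * Z' * mat_adjoint A" using 2 by simp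
  finally show ?thesis .
qed

lemma herm_proj:
  assumes A: "(A::complex mat) \<in> carrier_mat m n" and Z: "Z \<in> carrier_mat n n"
    and HZH: "mat_adjoint A * A * Z * (mat_adjoint A * A) = mat_adjoint A * A"
  shows "mat_adjoint (A * Z * mat_adjoint A) = A * Z * mat_adjoint A"
proof -
  note [simp] = carrier_matD[OF A] carrier_matD[OF Z]
  have "mat_adjoint (A * Z * mat_adjoint A) = A * mat_adjoint Z * mat_adjoint A"
    using A Z by (simp add: adj_mult assoc_dims)
  also have "\<dots> = A * Z * mat_adjoint A"
    by (rule indep[OF A _ Z HZH_adj[OF A Z HZH] HZH], insert Z, simp_all)
  finally show ?thesis .
qed

lemma mp_exists:
  assumes A: "(A::complex mat) \<in> carrier_mat m n"
  shows "\<exists>X. penrose A X"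
proof -
  let ?A' = "mat_adjoint A"
  note [simp] = carrier_matD[OF A]
  have A': "?A' \<in> carrier_mat n m" using A by simp
  have "?A' * A \<in> carrier_mat n n" by (intro carrier_matI, simp_all)
  from g1_exists[OF this] obtain Z2 where Z2: "Z2 \<in> carrier_mat n n" and H2: "?A' * A * Z2 * (?A' * A) = ?A' * A"
    by blast
  have "A * ?A' \<in> carrier_mat m m" by (intro carrier_matI, simp_all)
  from g1_exists[OF this] obtain Z1 where Z1: "Z1 \<in> carrier_mat m m" and H1': "A * ?A' * Z1 * (A * ?A') = A * ?A'"
    by blast
  note [simp] = carrier_matD[OF Z1] carrier_matD[OF Z2]
  have H1: "mat_adjoint ?A' * ?A' * Z1 * (mat_adjoint ?A' * ?A') = mat_adjoint ?A' * ?A'"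
    using H1' by simp
  have f1: "A * Z2 * ?A' * A = A" by (rule F1[OF A Z2 H2])
  have g1: "?A' * mat_adjoint Z1 * mat_adjoint ?A' * ?A' = ?A'"
    by (rule F1[OF A' _ HZH_adj[OF A' Z1 H1]], insert Z1, simp_all)
  have f2: "A * ?A' * Z1 * A = A"
    using arg_cong[OF g1, of mat_adjoint] A Z1 by (simp add: adj_mult assoc_dims)
  have h2: "mat_adjoint (A * Z2 * ?A') = A * Z2 * ?A'" by (rule herm_proj[OF A Z2 H2])
  have h1: "mat_adjoint (?A' * Z1 * A) = ?A' * Z1 * A"
    using herm_proj[OF A' Z1 H1] by simp
  define X where "X = ?A' * Z1 * A * Z2 * ?A'"
  have X: "X \<in> carrier_mat n m" unfolding X_def by (intro carrier_matI, simp_all)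
  have AX: "A * X = A * Z2 * ?A'"
  proof -
    have "A * X = (A * ?A' * Z1 * A) * (Z2 * ?A')" unfolding X_def by (simp add: assoc_dims)
    also have "\<dots> = A * (Z2 * ?A')" by (simp only: f2)
    finally show ?thesis by (simp add: assoc_dims)
  qed
  have XA: "X * A = ?A' * Z1 * A"
  proof -
    have "X * A = (?A' * Z1) * (A * Z2 * ?A' * A)" unfolding X_def by (simp add: assoc_dims)
    also have "\<dots> = (?A' * Z1) * A" by (simp only: f1)
    finally show ?thesis .
  qed
  have AXA: "A * X * A = A"
  proof -
    have "A * X * A = A * Z2 * ?A' * A" by (simp only: AX)
    thus ?thesis by (simp only: f1)
  qed
  have XAX: "X * A * X = X"
  proof -
    have "X * A * X = ?A' * Z1 * A * X" by (simp only: XA)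
    also have "\<dots> = (?A' * Z1) * (A * ?A' * Z1 * A) * (Z2 * ?A')" unfolding X_def by (simp add: assoc_dims)
    also have "\<dots> = (?A' * Z1) * A * (Z2 * ?A')" by (simp only: f2)
    also have "\<dots> = X" unfolding X_def by (simp add: assoc_dims)
    finally show ?thesis .
  qed
  have "penrose A X" unfolding penrose_def using X A AXA XAX AX XA h1 h2 by simp
  thus ?thesis by blast
qed

lemma mp_inverse_penrose: assumes "(A::complex mat) \<in> carrier_mat m n" shows "penrose A (mp_inverse A)"
proof -
  obtain X where X: "penrose A X" using mp_exists[OF assms] by blast
  show ?thesis using X unfolding mp_inverse_eq[OF X] .
qed



definition io :: "nat \<Rightarrow> nat \<Rightarrow> complex mat \<Rightarrow> complex mat" where
  "io r m X = four_block_mat X (0\<^sub>m r m) (0\<^sub>m m r) (0\<^sub>m m m)"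

definition fb :: "nat \<Rightarrow> nat \<Rightarrow> complex mat \<Rightarrow> complex mat \<Rightarrow> complex mat" where
  "fb r m K L = four_block_mat K L (0\<^sub>m m r) (0\<^sub>m m m)"

lemma io_dims[simp]: "dim_row X = r \<Longrightarrow> dim_row (io r m X) = r + m" "dim_col X = r \<Longrightarrow> dim_col (io r m X) = r + m"
  unfolding io_def by simp_all

lemma io_carrier: "X \<in> carrier_mat r r \<Longrightarrow> io r m X \<in> carrier_mat (r + m) (r + m)"
  unfolding io_def by (rule four_block_carrier_mat) simp_all

lemma fb_dims[simp]: "dim_row K = r \<Longrightarrow> dim_row (fb r m K L) = r + m" "dim_col K = r \<Longrightarrow> dim_col (fb r m K L) = r + m"
  unfolding fb_def by simp_all

lemma io_mult: assumes X: "X \<in> carrier_mat r r" and Y: "Y \<in> carrier_mat r r"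
  shows "io r m X * io r m Y = io r m (X * Y)"
proof -
  have "io r m X * io r m Y = four_block_mat (X * Y + 0\<^sub>m r m * 0\<^sub>m m r) (X * 0\<^sub>m r m + 0\<^sub>m r m * 0\<^sub>m m m)
    (0\<^sub>m m r * Y + 0\<^sub>m m m * 0\<^sub>m m r) (0\<^sub>m m r * 0\<^sub>m r m + 0\<^sub>m m m * 0\<^sub>m m m)"
    unfolding io_def by (rule mult_four_block_mat[OF X zero_carrier_mat zero_carrier_mat zero_carrier_mat Y zero_carrier_mat zero_carrier_mat zero_carrier_mat])
  also have "\<dots> = io r m (X * Y)" unfolding io_def using X Y by simp
  finally show ?thesis .
qed

lemma io_fb: assumes X: "X \<in> carrier_mat r r" and K: "K \<in> carrier_mat r r" and L: "L \<in> carrier_mat r m"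
  shows "io r m X * fb r m K L = four_block_mat (X * K) (X * L) (0\<^sub>m m r) (0\<^sub>m m m)"
proof -
  have "io r m X * fb r m K L = four_block_mat (X * K + 0\<^sub>m r m * 0\<^sub>m m r) (X * L + 0\<^sub>m r m * 0\<^sub>m m m)
    (0\<^sub>m m r * K + 0\<^sub>m m m * 0\<^sub>m m r) (0\<^sub>m m r * L + 0\<^sub>m m m * 0\<^sub>m m m)"
    unfolding io_def fb_def by (rule mult_four_block_mat[OF X zero_carrier_mat zero_carrier_mat zero_carrier_mat K L zero_carrier_mat zero_carrier_mat])
  also have "\<dots> = four_block_mat (X * K) (X * L) (0\<^sub>m m r) (0\<^sub>m m m)" using X K L by simp
  finally show ?thesis .
qed

lemma io_adj: assumes X: "X \<in> carrier_mat r r" shows "mat_adjoint (io r m X) = io r m (mat_adjoint X)"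
  unfolding io_def by (subst adj_four_block[OF X zero_carrier_mat zero_carrier_mat zero_carrier_mat], simp)

lemma fb_adj: assumes K: "K \<in> carrier_mat r r" and L: "L \<in> carrier_mat r m"
  shows "mat_adjoint (fb r m K L) = four_block_mat (mat_adjoint K) (0\<^sub>m r m) (mat_adjoint L) (0\<^sub>m m m)"
  unfolding fb_def by (subst adj_four_block[OF K L zero_carrier_mat zero_carrier_mat], simp)

lemma fb_fb_adj: assumes K: "K \<in> carrier_mat r r" and L: "L \<in> carrier_mat r m"
  and KL: "K * mat_adjoint K + L * mat_adjoint L = 1\<^sub>m r"
  shows "fb r m K L * mat_adjoint (fb r m K L) = io r m (1\<^sub>m r)"
proof -
  have "fb r m K L * mat_adjoint (fb r m K L) = four_block_mat (K * mat_adjoint K + L * mat_adjoint L) (K * 0\<^sub>m r m + L * 0\<^sub>m m m)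
    (0\<^sub>m m r * mat_adjoint K + 0\<^sub>m m m * mat_adjoint L) (0\<^sub>m m r * 0\<^sub>m r m + 0\<^sub>m m m * 0\<^sub>m m m)"
    unfolding fb_adj[OF K L] unfolding fb_def
    by (rule mult_four_block_mat[OF K L zero_carrier_mat zero_carrier_mat adj_carrier[OF K] zero_carrier_mat adj_carrier[OF L] zero_carrier_mat])
  also have "\<dots> = io r m (1\<^sub>m r)" unfolding io_def KL using K L by simp
  finally show ?thesis .
qed

lemma io_inj: assumes X: "X \<in> carrier_mat r r" and Y: "Y \<in> carrier_mat r r" and e: "io r m X = io r m Y"
  shows "X = Y"
proof (rule eq_matI)
  fix i j assume i: "i < dim_row Y" and j: "j < dim_col Y"
  have "io r m X $$ (i,j) = io r m Y $$ (i,j)" by (simp only: e)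
  thus "X $$ (i,j) = Y $$ (i,j)" using i j X Y unfolding io_def by simp
qed (use X Y in simp_all)

lemma unitary_conj_penrose:
  assumes U: "unitary_mat U n" and A: "A \<in> carrier_mat n n" and X: "X \<in> carrier_mat n n"
    and p: "penrose A X"
  shows "penrose (U * A * mat_adjoint U) (U * X * mat_adjoint U)"
proof -
  have Uc: "U \<in> carrier_mat n n" and UU: "mat_adjoint U * U = 1\<^sub>m n" and UU': "U * mat_adjoint U = 1\<^sub>m n"
    using U unfolding unitary_mat_def by simp_all
  note [simp] = carrier_matD[OF Uc] carrier_matD[OF A] carrier_matD[OF X]
  have uu[simp]: "mat_adjoint U * (U * Y) = Y" if "dim_row Y = n" for Y
  proof -
    have "mat_adjoint U * (U * Y) = (mat_adjoint U * U) * Y" using that by (simp add: assoc_dims)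
    thus ?thesis using UU that by simp
  qed
  note c = p[unfolded penrose_def]
  have 1: "A * X * A = A" by (rule c[THEN conjunct2, THEN conjunct1])
  have 2: "X * A * X = X" by (rule c[THEN conjunct2, THEN conjunct2, THEN conjunct1])
  have 3: "mat_adjoint (A * X) = A * X" by (rule c[THEN conjunct2, THEN conjunct2, THEN conjunct2, THEN conjunct1])
  have 4: "mat_adjoint (X * A) = X * A" by (rule c[THEN conjunct2, THEN conjunct2, THEN conjunct2, THEN conjunct2])
  have e1: "U * A * mat_adjoint U * (U * X * mat_adjoint U) * (U * A * mat_adjoint U) = U * (A * X * A) * mat_adjoint U"
    by (simp add: assoc_dims)
  have e2: "U * X * mat_adjoint U * (U * A * mat_adjoint U) * (U * X * mat_adjoint U) = U * (X * A * X) * mat_adjoint U"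
    by (simp add: assoc_dims)
  have e3: "U * A * mat_adjoint U * (U * X * mat_adjoint U) = U * (A * X) * mat_adjoint U"
    by (simp add: assoc_dims)
  have e4: "U * X * mat_adjoint U * (U * A * mat_adjoint U) = U * (X * A) * mat_adjoint U"
    by (simp add: assoc_dims)
  have adjc: "mat_adjoint (U * Y * mat_adjoint U) = U * mat_adjoint Y * mat_adjoint U" if "Y \<in> carrier_mat n n" for Y
    using that by (simp add: adj_mult assoc_dims)
  have c1: "U * X * mat_adjoint U \<in> carrier_mat (dim_col (U * A * mat_adjoint U)) (dim_row (U * A * mat_adjoint U))"
    by (intro carrier_matI) simp_all
  show ?thesis unfolding penrose_def
    by (intro conjI c1, simp only: e1 1, simp only: e2 2,
        simp only: e3 adjc[of "A * X"] mult_carrier_mat[OF A X] 3, simp only: e4 adjc[of "X * A"] mult_carrier_mat[OF X A] 4)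
qed

lemma col_range_mult: assumes P: "P \<in> carrier_mat a b" and Q: "Q \<in> carrier_mat b c"
  shows "col_range (P * Q) \<subseteq> col_range P"
proof
  fix v assume "v \<in> col_range (P * Q)"
  then obtain x where x: "x \<in> carrier_vec (dim_col (P * Q))" and v: "v = P * Q *\<^sub>v x" unfolding col_range_def by blast
  have x': "x \<in> carrier_vec c" using x Q by simp
  have "v = P *\<^sub>v (Q *\<^sub>v x)" unfolding v using P Q x' by (simp add: assoc_mult_mat_vec)
  moreover have "Q *\<^sub>v x \<in> carrier_vec (dim_col P)" using P Q x' by simp
  ultimately show "v \<in> col_range P" unfolding col_range_def by blast
qed



lemma core_penrose:
  assumes G: "G \<in> carrier_mat r r" and M: "M \<in> carrier_mat r r" and K: "K \<in> carrier_mat r r" and L: "L \<in> carrier_mat r m"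
    and KL: "K * mat_adjoint K + L * mat_adjoint L = 1\<^sub>m r" and p: "penrose G M"
  shows "penrose (io r m G * fb r m K L) (mat_adjoint (fb r m K L) * io r m M)"
proof -
  let ?I = "io r m" and ?F = "fb r m K L"
  let ?F' = "mat_adjoint ?F"
  note [simp] = carrier_matD[OF G] carrier_matD[OF M] carrier_matD[OF K] carrier_matD[OF L]
  have FF: "?F * ?F' = ?I (1\<^sub>m r)" by (rule fb_fb_adj[OF K L KL])
  note c = p[unfolded penrose_def]
  have 1: "G * M * G = G" by (rule c[THEN conjunct2, THEN conjunct1])
  have 2: "M * G * M = M" by (rule c[THEN conjunct2, THEN conjunct2, THEN conjunct1])
  have 3: "mat_adjoint (G * M) = G * M" by (rule c[THEN conjunct2, THEN conjunct2, THEN conjunct2, THEN conjunct1])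
  have 4: "mat_adjoint (M * G) = M * G" by (rule c[THEN conjunct2, THEN conjunct2, THEN conjunct2, THEN conjunct2])
  have GM: "G * M \<in> carrier_mat r r" "M * G \<in> carrier_mat r r" using G M by simp_all
  have iGM: "?I G * ?I M = ?I (G * M)" by (rule io_mult[OF G M])
  have iMG: "?I M * ?I G = ?I (M * G)" by (rule io_mult[OF M G])
  have iG1: "?I G * ?I (1\<^sub>m r) = ?I G" using io_mult[OF G one_carrier_mat] G by simp
  have iM1: "?I M * ?I (1\<^sub>m r) = ?I M" using io_mult[OF M one_carrier_mat] M by simp
  have iMG1: "?I (M * G) * ?I (1\<^sub>m r) = ?I (M * G)" using io_mult[OF GM(2) one_carrier_mat] GM by simp
  have iGMG: "?I (G * M) * ?I G = ?I G" using io_mult[OF GM(1) G] 1 by simp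
  have iMGM: "?I (M * G) * ?I M = ?I M" using io_mult[OF GM(2) M] 2 by simp
  have e1: "?I G * ?F * (?F' * ?I M) * (?I G * ?F) = ?I G * (?F * ?F') * ?I M * ?I G * ?F"
    by (simp add: assoc_dims)
  have AXA: "?I G * ?F * (?F' * ?I M) * (?I G * ?F) = ?I G * ?F"
    by (simp only: e1 FF iG1 iGM iGMG)
  have e2: "?F' * ?I M * (?I G * ?F) * (?F' * ?I M) = ?F' * (?I M * ?I G * (?F * ?F') * ?I M)"
    by (simp add: assoc_dims)
  have XAX: "?F' * ?I M * (?I G * ?F) * (?F' * ?I M) = ?F' * ?I M"
    by (simp only: e2 FF iMG iMG1 iMGM)
  have e3: "?I G * ?F * (?F' * ?I M) = ?I G * (?F * ?F') * ?I M"
    by (simp add: assoc_dims)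
  have AX: "?I G * ?F * (?F' * ?I M) = ?I (G * M)"
    by (simp only: e3 FF iG1 iGM)
  have e4: "?F' * ?I M * (?I G * ?F) = ?F' * (?I M * ?I G) * ?F"
    by (simp add: assoc_dims)
  have XA: "?F' * ?I M * (?I G * ?F) = ?F' * ?I (M * G) * ?F"
    by (simp only: e4 iMG)
  have adjAX: "mat_adjoint (?I (G * M)) = ?I (G * M)" using io_adj[OF GM(1)] 3 by simp
  have adjXA: "mat_adjoint (?F' * ?I (M * G) * ?F) = ?F' * ?I (M * G) * ?F"
  proof -
    have "mat_adjoint (?F' * ?I (M * G) * ?F) = ?F' * mat_adjoint (?I (M * G)) * ?F"
      by (simp add: adj_mult assoc_dims)
    thus ?thesis using io_adj[OF GM(2)] 4 by simp
  qed
  have cX: "?F' * ?I M \<in> carrier_mat (dim_col (?I G * ?F)) (dim_row (?I G * ?F))"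
    by (intro carrier_matI) simp_all
  show ?thesis unfolding penrose_def
    by (intro conjI cX AXA XAX, simp only: AX adjAX, simp only: XA adjXA)
qed



lemma diag_mult_inv:
  assumes pos: "\<forall>i<r. \<sigma> i > 0"
  shows "mat r r (\<lambda>(i,j). if i = j then complex_of_real (\<sigma> i) else 0) *
         mat r r (\<lambda>(i,j). if i = j then complex_of_real (1 / \<sigma> i) else 0) = 1\<^sub>m r"
    (is "?S * ?Si = _")
proof (rule eq_matI)
  fix i j assume i: "i < dim_row (1\<^sub>m r :: complex mat)" and j: "j < dim_col (1\<^sub>m r :: complex mat)"
  hence i: "i < r" and j: "j < r" by simp_all
  have "(?S * ?Si) $$ (i,j) = (\<Sum>k\<in>{0..<r}. ?S $$ (i,k) * ?Si $$ (k,j))"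
    using i j by (simp add: scalar_prod_def)
  also have "\<dots> = (\<Sum>k\<in>{0..<r}. if k = i then ?S $$ (i,i) * ?Si $$ (i,j) else 0)"
    using i by (intro sum.cong) auto
  also have "\<dots> = ?S $$ (i,i) * ?Si $$ (i,j)" using i by simp
  also have "\<dots> = complex_of_real (\<sigma> i) * ?Si $$ (i,j)" using i by simp
  also have "\<dots> = (if i = j then 1 else 0)"
  proof -
    have "\<sigma> i \<noteq> 0" "\<sigma> j \<noteq> 0" using pos i j by (metis less_irrefl)+
    thus ?thesis using i j by simp
  qed
  finally show "(?S * ?Si) $$ (i,j) = 1\<^sub>m r $$ (i,j)" using i j by simp
qed simp_all

lemma diag_mult_inv':
  assumes pos: "\<forall>i<r. \<sigma> i > 0"
  shows "mat r r (\<lambda>(i,j). if i = j then complex_of_real (1 / \<sigma> i) else 0) *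
         mat r r (\<lambda>(i,j). if i = j then complex_of_real (\<sigma> i) else 0) = 1\<^sub>m r"
    (is "?Si * ?S = _")
proof (rule eq_matI)
  fix i j assume i: "i < dim_row (1\<^sub>m r :: complex mat)" and j: "j < dim_col (1\<^sub>m r :: complex mat)"
  hence i: "i < r" and j: "j < r" by simp_all
  have "(?Si * ?S) $$ (i,j) = (\<Sum>k\<in>{0..<r}. ?Si $$ (i,k) * ?S $$ (k,j))"
    using i j by (simp add: scalar_prod_def)
  also have "\<dots> = (\<Sum>k\<in>{0..<r}. if k = i then ?Si $$ (i,i) * ?S $$ (i,j) else 0)"
    using i by (intro sum.cong) auto
  also have "\<dots> = ?Si $$ (i,i) * ?S $$ (i,j)" using i by simp
  also have "\<dots> = complex_of_real (1 / \<sigma> i) * ?S $$ (i,j)" using i by simp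
  also have "\<dots> = (if i = j then 1 else 0)"
  proof -
    have "\<sigma> i \<noteq> 0" "\<sigma> j \<noteq> 0" using pos i j by (metis less_irrefl)+
    thus ?thesis using i j by simp
  qed
  finally show "(?Si * ?S) $$ (i,j) = 1\<^sub>m r $$ (i,j)" using i j by simp
qed simp_all



theorem theorem5p5:
  fixes n r :: nat and B U K L T :: "complex mat" and \<sigma> :: "nat \<Rightarrow> real"
  defines "Sig \<equiv> mat r r (\<lambda>(i,j). if i = j then complex_of_real (\<sigma> i) else 0)"
      and "SigInv \<equiv> mat r r (\<lambda>(i,j). if i = j then complex_of_real (1 / \<sigma> i) else 0)"
  assumes B: "B \<in> carrier_mat n n" and Bnz: "B \<noteq> 0\<^sub>m n n"
      and rk: "vec_space.rank n B = r"
      and U: "unitary_mat U n"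
      and sig_pos: "\<forall>i<r. \<sigma> i > 0"
      and sig_sv: "\<forall>i<r. \<exists>v. v \<in> carrier_vec n \<and> v \<noteq> 0\<^sub>v n \<and>
                     (mat_adjoint B * B) *\<^sub>v v = complex_of_real ((\<sigma> i)\<^sup>2) \<cdot>\<^sub>v v"
      and K: "K \<in> carrier_mat r r" and L: "L \<in> carrier_mat r (n - r)"
      and KL: "K * mat_adjoint K + L * mat_adjoint L = 1\<^sub>m r"
      and HS: "B = U * four_block_mat (Sig * K) (Sig * L) (0\<^sub>m (n - r) r) (0\<^sub>m (n - r) (n - r)) * mat_adjoint U"
      and T: "T \<in> carrier_mat r r" and Tidem: "T * T = T"
  shows "diamond_le
           (mp_inverse (U * four_block_mat (mp_inverse (SigInv * T) * K) (mp_inverse (SigInv * T) * L)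
                (0\<^sub>m (n - r) r) (0\<^sub>m (n - r) (n - r)) * mat_adjoint U))
           (mp_inverse B)
         \<longleftrightarrow> T * (mat_adjoint T - 1\<^sub>m r) * (SigInv * SigInv) * T = 0\<^sub>m r r"
proof -
  have rn: "r \<le> n" using vec_space.rank_le_nc B rk by metis
  have nm[simp]: "r + (n - r) = n" using rn by simp
  have Uc: "U \<in> carrier_mat n n" and UU: "mat_adjoint U * U = 1\<^sub>m n" and UU': "U * mat_adjoint U = 1\<^sub>m n"
    using U unfolding unitary_mat_def by simp_all
  have Sc: "Sig \<in> carrier_mat r r" unfolding Sig_def by simp
  have Sic: "SigInv \<in> carrier_mat r r" unfolding SigInv_def by simp
  have SSi: "Sig * SigInv = 1\<^sub>m r" unfolding Sig_def SigInv_def by (rule diag_mult_inv[OF sig_pos])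
  have SiS: "SigInv * Sig = 1\<^sub>m r" unfolding Sig_def SigInv_def by (rule diag_mult_inv'[OF sig_pos])
  have adjSi: "mat_adjoint SigInv = SigInv" unfolding SigInv_def by (rule adj_diag)
  define M0 where "M0 = SigInv * T"
  have M0c: "M0 \<in> carrier_mat r r" unfolding M0_def using Sic T by simp
  define G0 where "G0 = mp_inverse M0"
  have pM: "penrose M0 G0" unfolding G0_def by (rule mp_inverse_penrose[OF M0c])
  have "G0 \<in> carrier_mat (dim_col M0) (dim_row M0)" using pM[unfolded penrose_def] by (rule conjunct1)
  hence G0c: "G0 \<in> carrier_mat r r" using M0c by simp
  have pG: "penrose G0 M0" by (rule penrose_sym[OF pM])
  have pS: "penrose Sig SigInv" unfolding penrose_def using Sc Sic SSi SiS by simp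
  let ?I = "io r (n - r)" and ?F = "fb r (n - r) K L"
  let ?F' = "mat_adjoint ?F"
  let ?U' = "mat_adjoint U"
  note [simp] = carrier_matD[OF Uc] carrier_matD[OF K] carrier_matD[OF L] carrier_matD[OF T]
    carrier_matD[OF Sc] carrier_matD[OF Sic] carrier_matD[OF M0c] carrier_matD[OF G0c]
  have Fc: "?F \<in> carrier_mat n n" by (intro carrier_matI) simp_all
  have F'c: "?F' \<in> carrier_mat n n" using Fc by simp
  have Ic: "?I X \<in> carrier_mat n n" if "X \<in> carrier_mat r r" for X
    using io_carrier[OF that, of "n - r"] by simp
  have FF: "?F * ?F' = ?I (1\<^sub>m r)" by (rule fb_fb_adj[OF K L KL])
  have Aeq: "U * four_block_mat (mp_inverse (SigInv * T) * K) (mp_inverse (SigInv * T) * L)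
                (0\<^sub>m (n - r) r) (0\<^sub>m (n - r) (n - r)) * mat_adjoint U = U * (?I G0 * ?F) * ?U'"
    unfolding G0_def M0_def by (simp only: io_fb[OF G0c[unfolded G0_def M0_def] K L])
  have Beq: "B = U * (?I Sig * ?F) * ?U'" unfolding HS by (simp only: io_fb[OF Sc K L])
  define X where "X = U * (?F' * ?I M0) * ?U'"
  define Y where "Y = U * (?F' * ?I SigInv) * ?U'"
  have pA: "penrose (?I G0 * ?F) (?F' * ?I M0)" by (rule core_penrose[OF G0c M0c K L KL pG])
  have pB: "penrose (?I Sig * ?F) (?F' * ?I SigInv)" by (rule core_penrose[OF Sc Sic K L KL pS])
  have mpA: "mp_inverse (U * (?I G0 * ?F) * ?U') = X"
    unfolding X_def by (rule mp_inverse_eq, rule unitary_conj_penrose[OF U _ _ pA],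
      rule mult_carrier_mat[OF Ic[OF G0c] Fc], rule mult_carrier_mat[OF F'c Ic[OF M0c]])
  have mpB: "mp_inverse B = Y"
    unfolding Y_def Beq by (rule mp_inverse_eq, rule unitary_conj_penrose[OF U _ _ pB],
      rule mult_carrier_mat[OF Ic[OF Sc] Fc], rule mult_carrier_mat[OF F'c Ic[OF Sic]])
  have main: "diamond_le X Y \<longleftrightarrow> T * (mat_adjoint T - 1\<^sub>m r) * (SigInv * SigInv) * T = 0\<^sub>m r r"
  proof -
    have Xc: "X \<in> carrier_mat n n" unfolding X_def by (intro carrier_matI) simp_all
    have Yc: "Y \<in> carrier_mat n n" unfolding Y_def by (intro carrier_matI) simp_all
    have SM0c: "Sig * M0 \<in> carrier_mat r r" using Sc M0c by simp
    have adjM0c: "mat_adjoint M0 \<in> carrier_mat r r" using M0c by simp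
    have SaM0c: "Sig * mat_adjoint M0 \<in> carrier_mat r r" using Sc adjM0c by simp
    have FUF: "?F * (?U' * U) * ?F' = ?I (1\<^sub>m r)" using UU FF Fc by simp
    have I1: "?I P * (?U' * U) = ?I P" if "P \<in> carrier_mat r r" for P
      using UU Ic[OF that] by simp
    have Im: "?I P * ?I Q = ?I (P * Q)" if "P \<in> carrier_mat r r" "Q \<in> carrier_mat r r" for P Q
      by (rule io_mult[OF that])
    have Im1: "?I P * ?I (1\<^sub>m r) = ?I P" if "P \<in> carrier_mat r r" for P
      using io_mult[OF that one_carrier_mat, of "n - r"] that by simp
    have cc: "?I P * (?U' * U) * ?I Q * (?F * (?U' * U) * ?F') * ?I R = ?I (P * Q * R)"
      if P: "P \<in> carrier_mat r r" and Q: "Q \<in> carrier_mat r r" and R: "R \<in> carrier_mat r r" for P Q R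
    proof -
      have PQ: "P * Q \<in> carrier_mat r r" using P Q by simp
      show ?thesis by (simp only: I1[OF P] FUF Im[OF P Q] Im1[OF PQ] Im[OF PQ R])
    qed
    define Zc where "Zc = U * ?I (Sig * M0) * ?U'"
    have Zcc: "Zc \<in> carrier_mat n n" unfolding Zc_def using Ic[OF SM0c] by (intro carrier_matI) simp_all
    have SiSM0: "SigInv * (Sig * M0) = M0"
    proof -
      have "SigInv * (Sig * M0) = (SigInv * Sig) * M0" by (simp add: assoc_dims)
      thus ?thesis using SiS by simp
    qed
    have "Y * Zc = U * ?F' * (?I SigInv * (?U' * U) * ?I (Sig * M0)) * ?U'"
      unfolding Y_def Zc_def by (simp add: assoc_dims)
    also have "\<dots> = U * ?F' * ?I M0 * ?U'"
      by (simp only: I1[OF Sic] Im[OF Sic SM0c] SiSM0)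
    also have "\<dots> = X" unfolding X_def by (simp add: assoc_dims)
    finally have XY: "X = Y * Zc" by simp
    have ra: "col_range X \<subseteq> col_range Y" unfolding XY by (rule col_range_mult[OF Yc Zcc])
    have adjX: "mat_adjoint X = U * ?I (mat_adjoint M0) * ?F * ?U'"
      unfolding X_def by (simp add: adj_mult assoc_dims io_adj[OF M0c])
    have adjY: "mat_adjoint Y = U * ?I SigInv * ?F * ?U'"
      unfolding Y_def by (simp add: adj_mult assoc_dims io_adj[OF Sic] adjSi)
    define Zb where "Zb = U * ?F' * ?I (Sig * mat_adjoint M0) * ?F * ?U'"
    have Zbc: "Zb \<in> carrier_mat n n" unfolding Zb_def using Ic[OF SaM0c] by (intro carrier_matI) simp_all
    have SiSaM0: "SigInv * (Sig * mat_adjoint M0) = mat_adjoint M0"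
    proof -
      have "SigInv * (Sig * mat_adjoint M0) = (SigInv * Sig) * mat_adjoint M0" by (simp add: assoc_dims)
      thus ?thesis using SiS by simp
    qed
    have "mat_adjoint Y * Zb = U * (?I SigInv * (?F * (?U' * U) * ?F') * ?I (Sig * mat_adjoint M0)) * ?F * ?U'"
      unfolding adjY Zb_def by (simp add: assoc_dims)
    also have "\<dots> = U * ?I (mat_adjoint M0) * ?F * ?U'"
      by (simp only: FUF Im1[OF Sic] Im[OF Sic SaM0c] SiSaM0)
    finally have aXY: "mat_adjoint X = mat_adjoint Y * Zb" unfolding adjX by simp
    have adjYc: "mat_adjoint Y \<in> carrier_mat n n" using Yc by simp
    have rb: "col_range (mat_adjoint X) \<subseteq> col_range (mat_adjoint Y)" unfolding aXY
      by (rule col_range_mult[OF adjYc Zbc])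
    have XYX: "X * mat_adjoint Y * X = U * ?F' * ?I (M0 * SigInv * M0) * ?U'"
    proof -
      have "X * mat_adjoint Y * X = U * ?F' * (?I M0 * (?U' * U) * ?I SigInv * (?F * (?U' * U) * ?F') * ?I M0) * ?U'"
        unfolding adjY X_def by (simp add: assoc_dims)
      also have "\<dots> = U * ?F' * ?I (M0 * SigInv * M0) * ?U'" by (simp only: cc[OF M0c Sic M0c])
      finally show ?thesis .
    qed
    have XXX: "X * mat_adjoint X * X = U * ?F' * ?I (M0 * mat_adjoint M0 * M0) * ?U'"
    proof -
      have "X * mat_adjoint X * X = U * ?F' * (?I M0 * (?U' * U) * ?I (mat_adjoint M0) * (?F * (?U' * U) * ?F') * ?I M0) * ?U'"
        unfolding adjX by (simp add: X_def assoc_dims)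
      also have "\<dots> = U * ?F' * ?I (M0 * mat_adjoint M0 * M0) * ?U'" by (simp only: cc[OF M0c adjM0c M0c])
      finally show ?thesis .
    qed
    have inj: "P = Q" if P: "P \<in> carrier_mat r r" and Q: "Q \<in> carrier_mat r r"
      and e: "U * ?F' * ?I P * ?U' = U * ?F' * ?I Q * ?U'" for P Q
    proof -
      have red: "?F * ?U' * (U * ?F' * ?I R * ?U') * U = ?I R" if R: "R \<in> carrier_mat r r" for R
      proof -
        have "?F * ?U' * (U * ?F' * ?I R * ?U') * U = (?F * (?U' * U) * ?F') * ?I R * (?U' * U)"
          using R by (simp add: assoc_dims)
        also have "\<dots> = ?I (1\<^sub>m r) * ?I R * (?U' * U)" by (simp only: FUF)
        also have "\<dots> = ?I R" using R Ic[OF R] UU io_mult[OF one_carrier_mat R, of "n - r"] by simp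
        finally show ?thesis .
      qed
      have "?I P = ?I Q" using red[OF P] red[OF Q] e by metis
      thus ?thesis by (rule io_inj[OF P Q])
    qed
    have P1c: "M0 * SigInv * M0 \<in> carrier_mat r r" using M0c Sic by simp
    have P2c: "M0 * mat_adjoint M0 * M0 \<in> carrier_mat r r" by (intro carrier_matI) simp_all
    have rc: "X * mat_adjoint Y * X = X * mat_adjoint X * X \<longleftrightarrow> M0 * SigInv * M0 = M0 * mat_adjoint M0 * M0"
      unfolding XYX XXX using inj[OF P1c P2c] by metis
    have fin: "M0 * SigInv * M0 = M0 * mat_adjoint M0 * M0 \<longleftrightarrow> T * (mat_adjoint T - 1\<^sub>m r) * (SigInv * SigInv) * T = 0\<^sub>m r r"
    proof -
      let ?T' = "mat_adjoint T" and ?S2 = "SigInv * SigInv"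
      have T'c: "?T' \<in> carrier_mat r r" by (intro carrier_matI) simp_all
      have S2c: "?S2 \<in> carrier_mat r r" by (intro carrier_matI) simp_all
      define E1 where "E1 = T * ?S2 * T"
      define E2 where "E2 = T * ?T' * ?S2 * T"
      have E1c: "E1 \<in> carrier_mat r r" unfolding E1_def by (intro carrier_matI) simp_all
      have E2c: "E2 \<in> carrier_mat r r" unfolding E2_def by (intro carrier_matI) simp_all
      have p1: "M0 * SigInv * M0 = SigInv * E1" unfolding M0_def E1_def by (simp add: assoc_dims)
      have adjM0: "mat_adjoint M0 = ?T' * SigInv" unfolding M0_def by (simp add: adj_mult adjSi)
      have p2: "M0 * mat_adjoint M0 * M0 = SigInv * E2" unfolding adjM0 unfolding M0_def E2_def by (simp add: assoc_dims)
      have D: "T * (?T' - 1\<^sub>m r) * ?S2 * T = E2 - E1"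
      proof -
        have "T * (?T' - 1\<^sub>m r) = T * ?T' - T * 1\<^sub>m r" by (rule mult_minus_distrib_mat[OF T T'c one_carrier_mat])
        also have "\<dots> = T * ?T' - T" using T by simp
        finally have 1: "T * (?T' - 1\<^sub>m r) = T * ?T' - T" .
        have TT'c: "T * ?T' \<in> carrier_mat r r" by (intro carrier_matI) simp_all
        have 2: "(T * ?T' - T) * ?S2 = T * ?T' * ?S2 - T * ?S2" by (rule minus_mult_distrib_mat[OF TT'c T S2c])
        have c3: "T * ?T' * ?S2 \<in> carrier_mat r r" "T * ?S2 \<in> carrier_mat r r" by (intro carrier_matI, simp_all)+
        have 3: "(T * ?T' * ?S2 - T * ?S2) * T = T * ?T' * ?S2 * T - T * ?S2 * T" by (rule minus_mult_distrib_mat[OF c3 T])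
        show ?thesis unfolding 1 2 3 E1_def E2_def ..
      qed
      have SSiE: "Sig * (SigInv * E) = E" if "E \<in> carrier_mat r r" for E
      proof -
        have "Sig * (SigInv * E) = (Sig * SigInv) * E" using that by (simp add: assoc_dims)
        thus ?thesis using SSi that by simp
      qed
      have "M0 * SigInv * M0 = M0 * mat_adjoint M0 * M0 \<longleftrightarrow> E1 = E2"
      proof
        assume "M0 * SigInv * M0 = M0 * mat_adjoint M0 * M0"
        hence "SigInv * E1 = SigInv * E2" unfolding p1 p2 .
        hence "Sig * (SigInv * E1) = Sig * (SigInv * E2)" by simp
        thus "E1 = E2" unfolding SSiE[OF E1c] SSiE[OF E2c] .
      next
        assume "E1 = E2" thus "M0 * SigInv * M0 = M0 * mat_adjoint M0 * M0" unfolding p1 p2 by simp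
      qed
      also have "\<dots> \<longleftrightarrow> E2 - E1 = 0\<^sub>m r r"
      proof
        assume "E1 = E2" thus "E2 - E1 = 0\<^sub>m r r" using E1c by simp
      next
        assume "E2 - E1 = 0\<^sub>m r r" thus "E1 = E2" using minus_zero_eq[OF E2c E1c] by simp
      qed
      finally show ?thesis unfolding D .
    qed
    show ?thesis unfolding diamond_le_def using ra rb rc fin by blast
  qed
  show ?thesis unfolding Aeq mpA mpB by (rule main)
qed


end
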